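(* There exists a constant $C_0$ such that for every $m,\ell\ge1$, every choice of $\sigma_1\ge\sigma_2\ge\dots\ge\sigma_m\ge0$, $\rho_1\ge\rho_2\ge\dots\ge\rho_\ell>0$, $b_1,\dots,b_m>0$, $c_1,\dots,c_\ell>0$, every $1\le k\le m$, and both choices of sign, \[ \Bigl|\int_0^{\sqrt{\rho_\ell}}e^{\frac12i\lambda^2}e^{\pm i\sum_{j=1}^mb_j\sqrt{\lambda^2+\sigma_j}}\exp\Bigl(-\sum_{i=1}^\ell c_i\sqrt{\rho_i-\lambda^2}\Bigr)\frac{\lambda}{\sqrt{\lambda^2+\sigma_k}}\,d\lambda\Bigr|\le C_0\min\Bigl[(1+\sigma_1+\rho_\ell)^{1/4},\ m^{3/2}b_k^{-1}\max_{1\le j\le m}b_j\Bigr]. \] *)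

theory Defs
  imports "HOL-Analysis.Analysis"
begin

end

theory Submission
  imports Defs
begin


lemma peel_inc:
  fixes f g :: "real \<Rightarrow> real"
  assumes fi: "f integrable_on {a..b}"
   and K: "\<And>s t. a \<le> s \<Longrightarrow> s \<le> t \<Longrightarrow> t \<le> b \<Longrightarrow> \<bar>integral {s..t} f\<bar> \<le> K"
   and mono: "\<And>x y. a \<le> x \<Longrightarrow> x \<le> y \<Longrightarrow> y \<le> b \<Longrightarrow> g x \<le> g y"
   and M: "\<And>x. a \<le> x \<Longrightarrow> x \<le> b \<Longrightarrow> \<bar>g x\<bar> \<le> M"
   and st: "a \<le> s" "s \<le> t" "t \<le> b"
  shows "\<exists>J. ((\<lambda>x. g x * f x) has_integral J) {s..t} \<and> \<bar>J\<bar> \<le> 2*M*K"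
proof -
  have fi': "f integrable_on {s..t}" using integrable_subinterval_real[OF fi] st by auto
  obtain c where c: "c \<in> {s..t}"
    and hi: "((\<lambda>x. g x * f x) has_integral (g s * integral {s..c} f + g t * integral {c..t} f)) {s..t}"
    using second_mean_value_theorem_full[OF fi' \<open>s \<le> t\<close>, of g] mono st by force
  have "\<bar>g s * integral {s..c} f\<bar> \<le> M * K"
    unfolding abs_mult using M[of s] K[of s c] c st
    by (intro mult_mono) auto
  moreover have "\<bar>g t * integral {c..t} f\<bar> \<le> M * K"
    unfolding abs_mult using M[of t] K[of c t] c st
    by (intro mult_mono) auto
  ultimately show ?thesis using hi
    by (intro exI[of _ "g s * integral {s..c} f + g t * integral {c..t} f"]) auto
qed

lemma peel:
  fixes f g :: "real \<Rightarrow> real"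
  assumes fi: "f integrable_on {a..b}"
   and K: "\<And>s t. a \<le> s \<Longrightarrow> s \<le> t \<Longrightarrow> t \<le> b \<Longrightarrow> \<bar>integral {s..t} f\<bar> \<le> K"
   and mono: "(\<forall>x y. a \<le> x \<longrightarrow> x \<le> y \<longrightarrow> y \<le> b \<longrightarrow> g x \<le> g y) \<or>
              (\<forall>x y. a \<le> x \<longrightarrow> x \<le> y \<longrightarrow> y \<le> b \<longrightarrow> g y \<le> g x)"
   and M: "\<And>x. a \<le> x \<Longrightarrow> x \<le> b \<Longrightarrow> \<bar>g x\<bar> \<le> M"
   and st: "a \<le> s" "s \<le> t" "t \<le> b"
  shows "(\<lambda>x. g x * f x) integrable_on {s..t} \<and> \<bar>integral {s..t} (\<lambda>x. g x * f x)\<bar> \<le> 2*M*K"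
  using mono
proof
  assume "\<forall>x y. a \<le> x \<longrightarrow> x \<le> y \<longrightarrow> y \<le> b \<longrightarrow> g x \<le> g y"
  then have mi: "\<And>x y. a \<le> x \<Longrightarrow> x \<le> y \<Longrightarrow> y \<le> b \<Longrightarrow> g x \<le> g y" by blast
  have "\<exists>J. ((\<lambda>x. g x * f x) has_integral J) {s..t} \<and> \<bar>J\<bar> \<le> 2*M*K"
    by (rule peel_inc[where a=a and b=b]) (rule fi K mi M st | assumption)+
  then obtain J where
    "((\<lambda>x. g x * f x) has_integral J) {s..t}" "\<bar>J\<bar> \<le> 2*M*K" by blast
  then show ?thesis by (auto simp: integral_unique)
next
  assume "\<forall>x y. a \<le> x \<longrightarrow> x \<le> y \<longrightarrow> y \<le> b \<longrightarrow> g y \<le> g x"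
  then have m': "\<And>x y. a \<le> x \<Longrightarrow> x \<le> y \<Longrightarrow> y \<le> b \<Longrightarrow> - g x \<le> - g y" by simp
  have M': "\<And>x. a \<le> x \<Longrightarrow> x \<le> b \<Longrightarrow> \<bar>- g x\<bar> \<le> M" using M by simp
  have "\<exists>J. ((\<lambda>x. - g x * f x) has_integral J) {s..t} \<and> \<bar>J\<bar> \<le> 2*M*K"
    by (rule peel_inc[where a=a and b=b]) (rule fi K m' M' st | assumption)+
  then obtain J where J:
    "((\<lambda>x. - g x * f x) has_integral J) {s..t}" "\<bar>J\<bar> \<le> 2*M*K" by blast
  have "((\<lambda>x. g x * f x) has_integral -J) {s..t}"
    using has_integral_neg[OF J(1)] by simp
  then show ?thesis using J(2) by (auto simp: integral_unique)
qed

lemma split_thr: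
  fixes q :: "real \<Rightarrow> real"
  assumes "a \<le> b" and cont: "continuous_on {a..b} q"
    and mono: "\<And>x y. a \<le> x \<Longrightarrow> x \<le> y \<Longrightarrow> y \<le> b \<Longrightarrow> q x \<le> q y"
  obtains p where "a \<le> p" "p \<le> b" "a < p \<Longrightarrow> \<forall>x\<in>{a..p}. q x \<le> \<theta>"
     "p < b \<Longrightarrow> \<forall>x\<in>{p..b}. \<theta> \<le> q x"
proof (cases "\<theta> < q a")
  case True
  show ?thesis
    by (rule that[of a]) (use True mono \<open>a \<le> b\<close> in \<open>auto intro: order.trans[OF less_imp_le]\<close>)
next
  case False
  show ?thesis
  proof (cases "q b < \<theta>")
    case True
    show ?thesis
      by (rule that[of b]) (use True mono \<open>a \<le> b\<close> in \<open>force+\<close>)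
  next
    case F2: False
    obtain p where p: "p \<in> {a..b}" "q p = \<theta>"
      using IVT'[of q a \<theta> b] False F2 \<open>a \<le> b\<close> cont by force
    show ?thesis
      by (rule that[of p]) (use p mono in force)+
  qed
qed



locale setting =
  fixes m l :: nat and \<sigma> \<rho> b c :: "nat \<Rightarrow> real" and k :: nat and s :: real
  assumes m1: "1 \<le> m" and l1: "1 \<le> l"
    and \<sigma>mono: "\<forall>i j. 1 \<le> i \<longrightarrow> i \<le> j \<longrightarrow> j \<le> m \<longrightarrow> \<sigma> j \<le> \<sigma> i" and \<sigma>m: "\<sigma> m \<ge> 0"
    and \<rho>mono: "\<forall>i j. 1 \<le> i \<longrightarrow> i \<le> j \<longrightarrow> j \<le> l \<longrightarrow> \<rho> j \<le> \<rho> i" and \<rho>l: "\<rho> l > 0"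
    and bpos: "\<forall>j\<in>{1..m}. b j > 0" and cpos: "\<forall>i\<in>{1..l}. c i > 0"
    and kin: "k \<in> {1..m}" and s1: "s \<in> {1, -1}"
begin

definition "L = sqrt (\<rho> l)"
definition "A x = exp (- (\<Sum>i=1..l. c i * sqrt (\<rho> i - x\<^sup>2)))"
definition "w x = x / sqrt (x\<^sup>2 + \<sigma> k)"
definition "h x = A x * w x"
definition "\<phi> x = x\<^sup>2 / 2 + s * (\<Sum>j=1..m. b j * sqrt (x\<^sup>2 + \<sigma> j))"
definition "G u = (\<Sum>j=1..m. b j / sqrt (u + \<sigma> j))"
definition "q x = 1 + s * G (x\<^sup>2)"
definition "F x = exp (\<i> * complex_of_real (x\<^sup>2 / 2))
      * exp (\<i> * complex_of_real (s * (\<Sum>j=1..m. b j * sqrt (x\<^sup>2 + \<sigma> j))))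
      * complex_of_real (exp (- (\<Sum>i=1..l. c i * sqrt (\<rho> i - x\<^sup>2))))
      * complex_of_real (x / sqrt (x\<^sup>2 + \<sigma> k))"
definition "B = Max (b ` {1..m})"

lemma \<sigma>_nonneg: assumes j: "j \<in> {1..m}" shows "0 \<le> \<sigma> j"
proof -
  have "\<sigma> m \<le> \<sigma> j" using \<sigma>mono j by auto
  then show ?thesis using \<sigma>m by linarith
qed
lemma \<sigma>_le1: "j \<in> {1..m} \<Longrightarrow> \<sigma> j \<le> \<sigma> 1"
  using \<sigma>mono by auto
lemma \<rho>_ge: "i \<in> {1..l} \<Longrightarrow> \<rho> l \<le> \<rho> i"
  using \<rho>mono by auto
lemma b_pos: "j \<in> {1..m} \<Longrightarrow> 0 < b j" using bpos by auto
lemma b_le_B: "j \<in> {1..m} \<Longrightarrow> b j \<le> B"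
  unfolding B_def by (intro Max_ge) auto
lemma bk: "0 < b k" using bpos kin by auto
lemma \<sigma>k: "0 \<le> \<sigma> k" using \<sigma>_nonneg kin by auto
lemma L_pos: "0 < L" unfolding L_def using \<rho>l by auto
lemma L_sq: "L\<^sup>2 = \<rho> l" unfolding L_def using \<rho>l by auto

lemma c_nonneg: "i \<in> {1..l} \<Longrightarrow> 0 \<le> c i" using cpos by (simp add: less_imp_le)

lemma A_mono: assumes "0 \<le> x" "x \<le> y" shows "A x \<le> A y"
proof -
  have "x\<^sup>2 \<le> y\<^sup>2" using assms by (simp add: power_mono)
  then have "(\<Sum>i=1..l. c i * sqrt (\<rho> i - y\<^sup>2)) \<le> (\<Sum>i=1..l. c i * sqrt (\<rho> i - x\<^sup>2))"
    using c_nonneg by (intro sum_mono mult_left_mono) auto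
  then show ?thesis unfolding A_def by simp
qed

lemma A_pos: "0 < A x" unfolding A_def by simp

lemma A_le1: assumes "0 \<le> x" "x \<le> L" shows "A x \<le> 1"
proof -
  have "x\<^sup>2 \<le> \<rho> l" using assms L_sq by (metis power_mono)
  then have "0 \<le> (\<Sum>i=1..l. c i * sqrt (\<rho> i - x\<^sup>2))"
    using c_nonneg \<rho>_ge by (intro sum_nonneg mult_nonneg_nonneg) (auto intro: order.trans)
  then show ?thesis unfolding A_def by simp
qed

lemma w_nonneg: "0 \<le> x \<Longrightarrow> 0 \<le> w x" unfolding w_def using \<sigma>k by simp

lemma w_le1: assumes "0 \<le> x" shows "w x \<le> 1"
proof (cases "x = 0")
  case False
  then have "x \<le> sqrt (x\<^sup>2 + \<sigma> k)" using assms \<sigma>k by (simp add: real_le_rsqrt)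
  moreover have "0 < x\<^sup>2 + \<sigma> k" using False \<sigma>k by (simp add: add_pos_nonneg)
  ultimately show ?thesis unfolding w_def using False assms by (simp add: divide_le_eq_1)
qed (simp add: w_def)

lemma w_mono: assumes "0 \<le> x" "x \<le> y" shows "w x \<le> w y"
proof (cases "x = 0")
  case True then show ?thesis using w_nonneg assms by (simp add: w_def)
next
  case False
  then have xp: "0 < x" using assms by auto
  have "x * sqrt (y\<^sup>2 + \<sigma> k) \<le> y * sqrt (x\<^sup>2 + \<sigma> k)"
  proof -
    have "(x * sqrt (y\<^sup>2 + \<sigma> k))\<^sup>2 \<le> (y * sqrt (x\<^sup>2 + \<sigma> k))\<^sup>2"
    proof -
      have "x\<^sup>2 * \<sigma> k \<le> y\<^sup>2 * \<sigma> k" using assms \<sigma>k xp by (intro mult_right_mono power_mono) auto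
      then show ?thesis using \<sigma>k by (simp add: power_mult_distrib algebra_simps)
    qed
    moreover have "0 \<le> y * sqrt (x\<^sup>2 + \<sigma> k)" using assms xp \<sigma>k by simp
    ultimately show ?thesis by (rule power2_le_imp_le)
  qed
  moreover have "0 < x\<^sup>2 + \<sigma> k" "0 < y\<^sup>2 + \<sigma> k" using xp assms \<sigma>k
    by (simp_all add: add_pos_nonneg)
  then have "0 < sqrt (x\<^sup>2 + \<sigma> k)" "0 < sqrt (y\<^sup>2 + \<sigma> k)" by auto
  ultimately show ?thesis unfolding w_def by (simp add: divide_simps)
qed

lemma exp_i: "exp (\<i> * complex_of_real t) = complex_of_real (cos t) + \<i> * complex_of_real (sin t)"
  by (simp add: complex_eq_iff Re_exp Im_exp)

lemma F_eq: "F x = complex_of_real (cos (\<phi> x) * h x) + \<i> * complex_of_real (sin (\<phi> x) * h x)"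
proof -
  have "F x = exp (\<i> * complex_of_real (\<phi> x)) * complex_of_real (h x)"
    unfolding F_def \<phi>_def h_def A_def w_def
    by (simp add: exp_add[symmetric] distrib_left)
  then show ?thesis by (simp add: exp_i algebra_simps)
qed

lemma norm_F: "0 \<le> x \<Longrightarrow> x \<le> L \<Longrightarrow> norm (F x) \<le> w x"
proof -
  assume x: "0 \<le> x" "x \<le> L"
  have "norm (F x) = A x * w x"
    unfolding F_def A_def[symmetric] w_def[symmetric] using w_nonneg[OF x(1)] A_pos[of x]
    by (simp add: norm_mult norm_exp_i_times)
  also have "\<dots> \<le> w x" using A_le1[OF x] w_nonneg[OF x(1)] by (intro mult_left_le_one_le) (auto intro: less_imp_le A_pos)
  finally show ?thesis .
qed

end

context setting begin

lemma G_term_pos: "j \<in> {1..m} \<Longrightarrow> 0 < x \<Longrightarrow> 0 < x\<^sup>2 + \<sigma> j"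
  using \<sigma>_nonneg by (simp add: add_pos_nonneg)

lemma phi_deriv: assumes x: "0 < x" shows "(\<phi> has_real_derivative (x * q x)) (at x)"
proof -
  have d: "((\<lambda>x. b j * sqrt (x\<^sup>2 + \<sigma> j)) has_real_derivative (b j * (x / sqrt (x\<^sup>2 + \<sigma> j)))) (at x)"
    if j: "j \<in> {1..m}" for j
  proof -
    have pos: "0 < x\<^sup>2 + \<sigma> j" using G_term_pos[OF j x] .
    have d0: "((\<lambda>x. x\<^sup>2 + \<sigma> j) has_real_derivative (2 * x)) (at x)"
      by (auto intro!: derivative_eq_intros)
    have d1: "(sqrt has_real_derivative (inverse (sqrt (x\<^sup>2 + \<sigma> j)) / 2)) (at (x\<^sup>2 + \<sigma> j))"
      by (rule DERIV_real_sqrt) (use pos in simp)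
    have "((\<lambda>x. b j * sqrt (x\<^sup>2 + \<sigma> j)) has_real_derivative (b j * (inverse (sqrt (x\<^sup>2 + \<sigma> j)) / 2 * (2 * x)))) (at x)"
      using DERIV_cmult[OF DERIV_chain2[OF d1 d0], of "b j"] by simp
    then show ?thesis
      by (rule DERIV_cong) (simp add: field_simps)
  qed
  have ds: "((\<lambda>x. \<Sum>j=1..m. b j * sqrt (x\<^sup>2 + \<sigma> j)) has_real_derivative
      (\<Sum>j=1..m. b j * (x / sqrt (x\<^sup>2 + \<sigma> j)))) (at x)"
    by (rule DERIV_sum) (rule d)
  have dq: "((\<lambda>x. x\<^sup>2 / 2) has_real_derivative (2 * x / 2)) (at x)"
    by (auto intro!: derivative_eq_intros)
  have "(\<phi> has_real_derivative (2 * x / 2 + s * (\<Sum>j=1..m. b j * (x / sqrt (x\<^sup>2 + \<sigma> j))))) (at x)"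
    unfolding \<phi>_def by (intro DERIV_add DERIV_cmult dq ds)
  moreover have "2 * x / 2 + s * (\<Sum>j=1..m. b j * (x / sqrt (x\<^sup>2 + \<sigma> j))) = x * q x"
    unfolding q_def G_def by (simp add: algebra_simps sum_distrib_left)
  ultimately show ?thesis by simp
qed

lemma q_cont: assumes "0 < a" shows "continuous_on {a..b'} q"
proof -
  have "sqrt (x\<^sup>2 + \<sigma> j) \<noteq> 0" if "j \<in> {1..m}" "x \<in> {a..b'}" for j x
  proof -
    have "0 < x" using that(2) assms by auto
    from G_term_pos[OF that(1) this] show ?thesis by simp
  qed
  then show ?thesis unfolding q_def G_def by (intro continuous_intros) auto
qed

lemma G_anti: assumes "0 < x" "x \<le> y" shows "G (y\<^sup>2) \<le> G (x\<^sup>2)"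
  unfolding G_def
proof (intro sum_mono)
  fix j assume j: "j \<in> {1..m}"
  have "x\<^sup>2 \<le> y\<^sup>2" using assms by (simp add: power_mono)
  then have "sqrt (x\<^sup>2 + \<sigma> j) \<le> sqrt (y\<^sup>2 + \<sigma> j)" by simp
  moreover have "0 < sqrt (x\<^sup>2 + \<sigma> j)" using G_term_pos[OF j assms(1)] by simp
  ultimately show "b j / sqrt (y\<^sup>2 + \<sigma> j) \<le> b j / sqrt (x\<^sup>2 + \<sigma> j)"
    using b_pos[OF j] by (intro divide_left_mono) auto
qed

lemma G_pos: "0 < x \<Longrightarrow> 0 < G (x\<^sup>2)"
  unfolding G_def using b_pos G_term_pos m1 by (intro sum_pos) auto

lemma q_mono_neg: "s = -1 \<Longrightarrow> 0 < x \<Longrightarrow> x \<le> y \<Longrightarrow> q x \<le> q y"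
  unfolding q_def using G_anti by simp
lemma q_mono_pos: "s = 1 \<Longrightarrow> 0 < x \<Longrightarrow> x \<le> y \<Longrightarrow> q y \<le> q x"
  unfolding q_def using G_anti by simp

lemma F_integrable: "F integrable_on {0..L}"
proof (cases "\<sigma> k = 0")
  case False
  then have sk: "0 < \<sigma> k" using \<sigma>k by simp
  have pos: "sqrt (x\<^sup>2 + \<sigma> k) \<noteq> 0" for x
  proof -
    have "0 < x\<^sup>2 + \<sigma> k" using sk by (intro add_nonneg_pos) auto
    then show ?thesis by simp
  qed
  have "continuous_on {0..L} F" unfolding F_def
    using pos by (intro continuous_intros) auto
  then show ?thesis by (rule integrable_continuous_interval)
next
  case s0: True
  define E where "E x = exp (\<i> * complex_of_real (x\<^sup>2 / 2))
      * exp (\<i> * complex_of_real (s * (\<Sum>j=1..m. b j * sqrt (x\<^sup>2 + \<sigma> j))))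
      * complex_of_real (exp (- (\<Sum>i=1..l. c i * sqrt (\<rho> i - x\<^sup>2))))" for x
  have "continuous_on {0..L} E" unfolding E_def by (intro continuous_intros) auto
  then have Ei: "E integrable_on {0..L}" by (rule integrable_continuous_interval)
  have FE: "F x = E x" if "x \<in> {0..L} - {0}" for x
  proof -
    have x0: "0 < x" using that by auto
    have "sqrt (x\<^sup>2 + \<sigma> k) = x" using s0 x0 by simp
    then have h1: "x / sqrt (x\<^sup>2 + \<sigma> k) = 1" using x0 by simp
    show ?thesis unfolding F_def E_def by (simp only: h1 of_real_1 mult_1_right)
  qed
  show ?thesis by (rule integrable_spike_finite[of "{0}" "{0..L}" F E, OF _ FE Ei]) simp
qed

lemma trivial_bound:
  assumes "0 \<le> \<alpha>" "\<alpha> \<le> \<beta>" "\<beta> \<le> L"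
  shows "norm (integral {\<alpha>..\<beta>} F) \<le> (\<beta> - \<alpha>) * w \<beta>"
proof -
  have "F integrable_on {\<alpha>..\<beta>}"
    using integrable_subinterval_real[OF F_integrable] assms by auto
  then have hi: "(F has_integral integral {\<alpha>..\<beta>} F) (cbox \<alpha> \<beta>)"
    unfolding box_real by (rule integrable_integral)
  have "norm (F x) \<le> w \<beta>" if "x \<in> cbox \<alpha> \<beta>" for x
    using that assms norm_F[of x] w_mono[of x \<beta>] by auto
  from has_integral_bound[OF _ hi this] w_nonneg[of \<beta>] assms
  show ?thesis by (simp add: mult.commute)
qed

end


lemma inv_anti: fixes a b :: real shows "a \<le> b \<Longrightarrow> (0 < a \<or> b < 0) \<Longrightarrow> 1/b \<le> 1/a"
  by (auto simp: divide_simps)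

context setting begin

lemma osc_part:
  assumes ab: "0 < \<alpha>" "\<alpha> \<le> \<beta>" "\<beta> \<le> L" and eta: "0 < \<eta>"
   and reg: "(\<forall>x\<in>{\<alpha>..\<beta>}. \<eta> \<le> q x) \<or> (\<forall>x\<in>{\<alpha>..\<beta>}. q x \<le> -\<eta>)"
   and M2: "\<And>x. \<alpha> \<le> x \<Longrightarrow> x \<le> \<beta> \<Longrightarrow> 1 / sqrt (x\<^sup>2 + \<sigma> k) \<le> M2"
   and \<Psi>d: "\<And>x. \<alpha> \<le> x \<Longrightarrow> x \<le> \<beta> \<Longrightarrow> (\<Psi> has_real_derivative (T x * (x * q x))) (at x)"
   and \<Psi>b: "\<And>x. \<bar>\<Psi> x\<bar> \<le> 1"
  shows "(\<lambda>x. T x * h x) integrable_on {\<alpha>..\<beta>} \<and> \<bar>integral {\<alpha>..\<beta>} (\<lambda>x. T x * h x)\<bar> \<le> 16 * M2 / \<eta>"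
proof -
  define f1 where "f1 x = T x * (x * q x)" for x
  have ftc: "(f1 has_integral (\<Psi> t - \<Psi> s')) {s'..t}" if "\<alpha> \<le> s'" "s' \<le> t" "t \<le> \<beta>" for s' t
  proof (rule fundamental_theorem_of_calculus[OF \<open>s' \<le> t\<close>])
    fix x assume "x \<in> {s'..t}"
    then have "(\<Psi> has_real_derivative f1 x) (at x)" unfolding f1_def using \<Psi>d that by auto
    then show "(\<Psi> has_vector_derivative f1 x) (at x within {s'..t})"
      unfolding has_real_derivative_iff_has_vector_derivative
      by (rule has_vector_derivative_at_within)
  qed
  have f1int: "f1 integrable_on {\<alpha>..\<beta>}" using ftc[of \<alpha> \<beta>] ab by auto
  have K1: "\<bar>integral {s'..t} f1\<bar> \<le> 2" if "\<alpha> \<le> s'" "s' \<le> t" "t \<le> \<beta>" for s' t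
  proof -
    have "integral {s'..t} f1 = \<Psi> t - \<Psi> s'" using ftc[OF that] by (rule integral_unique)
    then show ?thesis using \<Psi>b[of t] \<Psi>b[of s'] by linarith
  qed
  have qpos: "0 < x" if "\<alpha> \<le> x" for x using that ab by auto
  have qabs: "\<eta> \<le> \<bar>q x\<bar>" if "\<alpha> \<le> x" "x \<le> \<beta>" for x
  proof -
    have "x \<in> {\<alpha>..\<beta>}" using that by auto
    then have "\<eta> \<le> q x \<or> q x \<le> -\<eta>" using reg by auto
    then show ?thesis by linarith
  qed
  have sg: "0 < q u \<or> q v < 0" if "\<alpha> \<le> u" "u \<le> \<beta>" "\<alpha> \<le> v" "v \<le> \<beta>" for u v
    using reg
  proof
    assume "\<forall>x\<in>{\<alpha>..\<beta>}. \<eta> \<le> q x"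
    then have "\<eta> \<le> q u" using that by auto
    then show ?thesis using eta by linarith
  next
    assume "\<forall>x\<in>{\<alpha>..\<beta>}. q x \<le> -\<eta>"
    then have "q v \<le> -\<eta>" using that by auto
    then show ?thesis using eta by linarith
  qed
  have mono3: "(\<forall>x y. \<alpha> \<le> x \<longrightarrow> x \<le> y \<longrightarrow> y \<le> \<beta> \<longrightarrow> 1 / q x \<le> 1 / q y) \<or>
              (\<forall>x y. \<alpha> \<le> x \<longrightarrow> x \<le> y \<longrightarrow> y \<le> \<beta> \<longrightarrow> 1 / q y \<le> 1 / q x)"
  proof (cases "s = -1")
    case True
    have "1 / q y \<le> 1 / q x" if "\<alpha> \<le> x" "x \<le> y" "y \<le> \<beta>" for x y
    proof (rule inv_anti)
      show "q x \<le> q y" using q_mono_neg[OF True qpos[OF that(1)] that(2)] .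
      show "0 < q x \<or> q y < 0" using sg that by auto
    qed
    then show ?thesis by blast
  next
    case False
    then have s: "s = 1" using s1 by auto
    have "1 / q x \<le> 1 / q y" if "\<alpha> \<le> x" "x \<le> y" "y \<le> \<beta>" for x y
    proof (rule inv_anti)
      show "q y \<le> q x" using q_mono_pos[OF s qpos[OF that(1)] that(2)] .
      show "0 < q y \<or> q x < 0" using sg that by auto
    qed
    then show ?thesis by blast
  qed
  have M3: "\<bar>1 / q x\<bar> \<le> 1 / \<eta>" if "\<alpha> \<le> x" "x \<le> \<beta>" for x
    using qabs[OF that] eta by (simp add: divide_simps)
  have P1: "(\<lambda>x. 1 / q x * f1 x) integrable_on {s'..t} \<and>
      \<bar>integral {s'..t} (\<lambda>x. 1 / q x * f1 x)\<bar> \<le> 2 * (1/\<eta>) * 2"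
    if "\<alpha> \<le> s'" "s' \<le> t" "t \<le> \<beta>" for s' t
    by (rule peel[where a=\<alpha> and b=\<beta>]) (rule f1int K1 mono3 M3 that | assumption)+
  have f2int: "(\<lambda>x. 1 / q x * f1 x) integrable_on {\<alpha>..\<beta>}" using P1[of \<alpha> \<beta>] ab by auto
  have K2: "\<bar>integral {s'..t} (\<lambda>x. 1 / q x * f1 x)\<bar> \<le> 2 * (1/\<eta>) * 2"
    if "\<alpha> \<le> s'" "s' \<le> t" "t \<le> \<beta>" for s' t using P1[OF that] by auto
  have mono2: "(\<forall>x y. \<alpha> \<le> x \<longrightarrow> x \<le> y \<longrightarrow> y \<le> \<beta> \<longrightarrow> 1 / sqrt (x\<^sup>2 + \<sigma> k) \<le> 1 / sqrt (y\<^sup>2 + \<sigma> k)) \<or>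
              (\<forall>x y. \<alpha> \<le> x \<longrightarrow> x \<le> y \<longrightarrow> y \<le> \<beta> \<longrightarrow> 1 / sqrt (y\<^sup>2 + \<sigma> k) \<le> 1 / sqrt (x\<^sup>2 + \<sigma> k))"
  proof -
    have "1 / sqrt (y\<^sup>2 + \<sigma> k) \<le> 1 / sqrt (x\<^sup>2 + \<sigma> k)" if "\<alpha> \<le> x" "x \<le> y" "y \<le> \<beta>" for x y
    proof (rule inv_anti)
      have "x\<^sup>2 \<le> y\<^sup>2" using that qpos[OF that(1)] by (simp add: power_mono)
      then show "sqrt (x\<^sup>2 + \<sigma> k) \<le> sqrt (y\<^sup>2 + \<sigma> k)" by simp
      show "0 < sqrt (x\<^sup>2 + \<sigma> k) \<or> sqrt (y\<^sup>2 + \<sigma> k) < 0"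
        using qpos[OF that(1)] \<sigma>k by (simp add: add_pos_nonneg)
    qed
    then show ?thesis by blast
  qed
  have M2': "\<bar>1 / sqrt (x\<^sup>2 + \<sigma> k)\<bar> \<le> M2" if "\<alpha> \<le> x" "x \<le> \<beta>" for x
    using M2[OF that] \<sigma>k by simp
  have P2: "(\<lambda>x. 1 / sqrt (x\<^sup>2 + \<sigma> k) * (1 / q x * f1 x)) integrable_on {s'..t} \<and>
      \<bar>integral {s'..t} (\<lambda>x. 1 / sqrt (x\<^sup>2 + \<sigma> k) * (1 / q x * f1 x))\<bar> \<le> 2 * M2 * (2 * (1/\<eta>) * 2)"
    if "\<alpha> \<le> s'" "s' \<le> t" "t \<le> \<beta>" for s' t
    by (rule peel[where a=\<alpha> and b=\<beta>]) (rule f2int K2 mono2 M2' that | assumption)+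
  have f3int: "(\<lambda>x. 1 / sqrt (x\<^sup>2 + \<sigma> k) * (1 / q x * f1 x)) integrable_on {\<alpha>..\<beta>}"
    using P2[of \<alpha> \<beta>] ab by auto
  have K3: "\<bar>integral {s'..t} (\<lambda>x. 1 / sqrt (x\<^sup>2 + \<sigma> k) * (1 / q x * f1 x))\<bar> \<le> 2 * M2 * (2 * (1/\<eta>) * 2)"
    if "\<alpha> \<le> s'" "s' \<le> t" "t \<le> \<beta>" for s' t using P2[OF that] by auto
  have mono1: "(\<forall>x y. \<alpha> \<le> x \<longrightarrow> x \<le> y \<longrightarrow> y \<le> \<beta> \<longrightarrow> A x \<le> A y) \<or>
              (\<forall>x y. \<alpha> \<le> x \<longrightarrow> x \<le> y \<longrightarrow> y \<le> \<beta> \<longrightarrow> A y \<le> A x)"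
    using A_mono ab by (meson less_le_not_le order.trans)
  have M1: "\<bar>A x\<bar> \<le> 1" if "\<alpha> \<le> x" "x \<le> \<beta>" for x
    using A_le1[of x] A_pos[of x] that ab by auto
  have P3: "(\<lambda>x. A x * (1 / sqrt (x\<^sup>2 + \<sigma> k) * (1 / q x * f1 x))) integrable_on {\<alpha>..\<beta>} \<and>
      \<bar>integral {\<alpha>..\<beta>} (\<lambda>x. A x * (1 / sqrt (x\<^sup>2 + \<sigma> k) * (1 / q x * f1 x)))\<bar> \<le> 2 * 1 * (2 * M2 * (2 * (1/\<eta>) * 2))"
    by (rule peel[where a=\<alpha> and b=\<beta>]) (rule f3int K3 mono1 M1 order_refl ab | assumption)+
  have eq: "A x * (1 / sqrt (x\<^sup>2 + \<sigma> k) * (1 / q x * f1 x)) = T x * h x" if "x \<in> {\<alpha>..\<beta>}" for x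
  proof -
    have "q x \<noteq> 0" using qabs[of x] that eta by auto
    moreover have "x \<noteq> 0" using qpos[of x] that by auto
    ultimately show ?thesis unfolding f1_def h_def w_def by (simp add: field_simps)
  qed
  have e16: "2 * 1 * (2 * M2 * (2 * (1 / \<eta>) * 2)) = 16 * M2 / \<eta>" by simp
  have c1: "integral {\<alpha>..\<beta>} (\<lambda>x. A x * (1 / sqrt (x\<^sup>2 + \<sigma> k) * (1 / q x * f1 x)))
     = integral {\<alpha>..\<beta>} (\<lambda>x. T x * h x)" by (rule integral_cong) (rule eq)
  have c2: "(\<lambda>x. A x * (1 / sqrt (x\<^sup>2 + \<sigma> k) * (1 / q x * f1 x))) integrable_on {\<alpha>..\<beta>}
     \<longleftrightarrow> (\<lambda>x. T x * h x) integrable_on {\<alpha>..\<beta>}" by (rule integrable_cong) (rule eq)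
  show ?thesis unfolding c2[symmetric] c1[symmetric] e16[symmetric] by (rule P3)
qed

end

context setting begin

lemma region:
  assumes ab: "0 < \<alpha>" "\<alpha> \<le> \<beta>" "\<beta> \<le> L" and eta: "0 < \<eta>"
   and reg: "(\<forall>x\<in>{\<alpha>..\<beta>}. \<eta> \<le> q x) \<or> (\<forall>x\<in>{\<alpha>..\<beta>}. q x \<le> -\<eta>)"
   and M2: "\<And>x. \<alpha> \<le> x \<Longrightarrow> x \<le> \<beta> \<Longrightarrow> 1 / sqrt (x\<^sup>2 + \<sigma> k) \<le> M2"
  shows "norm (integral {\<alpha>..\<beta>} F) \<le> 32 * M2 / \<eta>"
proof -
  have d1: "((\<lambda>x. sin (\<phi> x)) has_real_derivative (cos (\<phi> x) * (x * q x))) (at x)"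
    if "\<alpha> \<le> x" "x \<le> \<beta>" for x
    using phi_deriv[of x] that ab by (auto intro!: derivative_eq_intros)
  have d2: "((\<lambda>x. - cos (\<phi> x)) has_real_derivative (sin (\<phi> x) * (x * q x))) (at x)"
    if "\<alpha> \<le> x" "x \<le> \<beta>" for x
    using phi_deriv[of x] that ab by (auto intro!: derivative_eq_intros)
  note O1 = osc_part[OF ab eta reg M2 d1]
  note O2 = osc_part[OF ab eta reg M2 d2]
  define I1 where "I1 = integral {\<alpha>..\<beta>} (\<lambda>x. cos (\<phi> x) * h x)"
  define I2 where "I2 = integral {\<alpha>..\<beta>} (\<lambda>x. sin (\<phi> x) * h x)"
  have h1: "((\<lambda>x. cos (\<phi> x) * h x) has_integral I1) {\<alpha>..\<beta>}" using O1 unfolding I1_def by auto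
  have h2: "((\<lambda>x. sin (\<phi> x) * h x) has_integral I2) {\<alpha>..\<beta>}" using O2 unfolding I2_def by auto
  have Fe: "F = (\<lambda>x. complex_of_real (cos (\<phi> x) * h x) + \<i> * complex_of_real (sin (\<phi> x) * h x))"
    by (rule ext) (rule F_eq)
  have "(F has_integral (complex_of_real I1 + \<i> * complex_of_real I2)) {\<alpha>..\<beta>}"
    unfolding Fe by (intro has_integral_add has_integral_mult_right has_integral_of_real h1 h2)
  then have "integral {\<alpha>..\<beta>} F = complex_of_real I1 + \<i> * complex_of_real I2"
    by (rule integral_unique)
  also have "norm \<dots> \<le> \<bar>I1\<bar> + \<bar>I2\<bar>"
    using norm_triangle_ineq[of "complex_of_real I1" "\<i> * complex_of_real I2"]
    by (simp add: norm_mult)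
  also have "\<dots> \<le> 16 * M2 / \<eta> + 16 * M2 / \<eta>" using O1 O2 unfolding I1_def I2_def by auto
  finally show ?thesis by simp
qed

lemma G_diff_term:
  fixes s0 t0 :: real assumes "0 < s0" "s0 \<le> t0"
  shows "(t0 - s0) / (2 * (t0 * sqrt t0)) \<le> 1 / sqrt s0 - 1 / sqrt t0"
proof -
  define a where "a = sqrt s0"
  define c where "c = sqrt t0"
  have a: "0 < a" "a \<le> c" using assms unfolding a_def c_def by auto
  have s0: "s0 = a\<^sup>2" "t0 = c\<^sup>2" using assms unfolding a_def c_def by auto
  have "(c\<^sup>2 - a\<^sup>2) / (2 * (c\<^sup>2 * c)) \<le> 1 / a - 1 / c"
  proof -
    have "(c\<^sup>2 - a\<^sup>2) * (a * c) \<le> (c - a) * (2 * (c\<^sup>2 * c))"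
    proof -
      have h1: "a * a \<le> c * c" using a by (intro mult_mono) auto
      have h2: "c * a \<le> c * c" using a by (intro mult_left_mono) auto
      have "(c + a) * a \<le> 2 * c\<^sup>2" using h1 h2 by (simp add: power2_eq_square distrib_right)
      then have "(c - a) * ((c + a) * a) * c \<le> (c - a) * (2 * c\<^sup>2) * c"
        using a by (intro mult_right_mono mult_left_mono) auto
      then show ?thesis by (simp add: power2_eq_square algebra_simps)
    qed
    then show ?thesis using a by (simp add: divide_simps)
  qed
  then show ?thesis using s0 unfolding c_def[symmetric] a_def[symmetric] by simp
qed

lemma G_diff:
  assumes "0 < \<alpha>" "\<alpha> \<le> \<beta>"
  shows "(\<beta>\<^sup>2 - \<alpha>\<^sup>2) / 2 * (\<Sum>j=1..m. b j / ((\<beta>\<^sup>2 + \<sigma> j) * sqrt (\<beta>\<^sup>2 + \<sigma> j)))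
         \<le> G (\<alpha>\<^sup>2) - G (\<beta>\<^sup>2)"
proof -
  have "(\<beta>\<^sup>2 - \<alpha>\<^sup>2) / 2 * (\<Sum>j=1..m. b j / ((\<beta>\<^sup>2 + \<sigma> j) * sqrt (\<beta>\<^sup>2 + \<sigma> j)))
      = (\<Sum>j=1..m. b j * (((\<beta>\<^sup>2 + \<sigma> j) - (\<alpha>\<^sup>2 + \<sigma> j)) / (2 * ((\<beta>\<^sup>2 + \<sigma> j) * sqrt (\<beta>\<^sup>2 + \<sigma> j)))))"
    by (simp add: sum_distrib_left field_simps)
  also have "\<dots> \<le> (\<Sum>j=1..m. b j * (1 / sqrt (\<alpha>\<^sup>2 + \<sigma> j) - 1 / sqrt (\<beta>\<^sup>2 + \<sigma> j)))"
  proof (intro sum_mono mult_left_mono G_diff_term)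
    fix j assume j: "j \<in> {1..m}"
    show "0 < \<alpha>\<^sup>2 + \<sigma> j" using G_term_pos[OF j assms(1)] .
    show "\<alpha>\<^sup>2 + \<sigma> j \<le> \<beta>\<^sup>2 + \<sigma> j" using assms by (simp add: power_mono)
    show "0 \<le> b j" using b_pos[OF j] by auto
  qed
  also have "\<dots> = G (\<alpha>\<^sup>2) - G (\<beta>\<^sup>2)" unfolding G_def by (simp add: sum_subtractf algebra_simps)
  finally show ?thesis .
qed

end

context setting begin

lemma norm3: fixes z1 z2 z3 :: complex shows "norm (z1 + (z2 + z3)) \<le> norm z1 + norm z2 + norm z3"
proof -
  have "norm (z2 + z3) \<le> norm z2 + norm z3" by (rule norm_triangle_ineq)
  moreover have "norm (z1 + (z2 + z3)) \<le> norm z1 + norm (z2 + z3)" by (rule norm_triangle_ineq)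
  ultimately show ?thesis by linarith
qed

lemma norm4: fixes z1 z2 z3 z4 :: complex shows "norm (z1 + (z2 + (z3 + z4))) \<le> norm z1 + norm z2 + norm z3 + norm z4"
proof -
  have "norm (z2 + (z3 + z4)) \<le> norm z2 + norm z3 + norm z4" by (rule norm3)
  moreover have "norm (z1 + (z2 + (z3 + z4))) \<le> norm z1 + norm (z2 + (z3 + z4))" by (rule norm_triangle_ineq)
  ultimately show ?thesis by linarith
qed

lemma norm5: fixes z1 z2 z3 z4 z5 :: complex
  shows "norm (z1 + (z2 + (z3 + (z4 + z5)))) \<le> norm z1 + norm z2 + norm z3 + norm z4 + norm z5"
proof -
  have "norm (z2 + (z3 + (z4 + z5))) \<le> norm z2 + norm z3 + norm z4 + norm z5" by (rule norm4)
  moreover have "norm (z1 + (z2 + (z3 + (z4 + z5)))) \<le> norm z1 + norm (z2 + (z3 + (z4 + z5)))" by (rule norm_triangle_ineq)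
  ultimately show ?thesis by linarith
qed

lemma region':
  assumes ab: "0 < \<alpha>" "\<alpha> \<le> \<beta>" "\<beta> \<le> L" and eta: "0 < \<eta>" and M2pos: "0 \<le> M2"
   and reg: "\<alpha> < \<beta> \<Longrightarrow> (\<forall>x\<in>{\<alpha>..\<beta>}. \<eta> \<le> q x) \<or> (\<forall>x\<in>{\<alpha>..\<beta>}. q x \<le> -\<eta>)"
   and M2: "\<And>x. \<alpha> < \<beta> \<Longrightarrow> \<alpha> \<le> x \<Longrightarrow> x \<le> \<beta> \<Longrightarrow> 1 / sqrt (x\<^sup>2 + \<sigma> k) \<le> M2"
  shows "norm (integral {\<alpha>..\<beta>} F) \<le> 32 * M2 / \<eta>"
proof (cases "\<alpha> = \<beta>")
  case True then show ?thesis using M2pos eta by simp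
next
  case False then show ?thesis using region[OF ab eta reg M2] ab by auto
qed

lemma int_split: "0 \<le> a \<Longrightarrow> a \<le> c' \<Longrightarrow> c' \<le> b' \<Longrightarrow> b' \<le> L \<Longrightarrow>
   integral {a..b'} F = integral {a..c'} F + integral {c'..b'} F"
proof -
  assume h: "0 \<le> a" "a \<le> c'" "c' \<le> b'" "b' \<le> L"
  have "F integrable_on {a..b'}" by (rule integrable_subinterval_real[OF F_integrable]) (use h in auto)
  from Henstock_Kurzweil_Integration.integral_combine[OF h(2) h(3) this] show ?thesis by simp
qed

lemma D_le_inv: "0 < x \<Longrightarrow> 1 / sqrt (x\<^sup>2 + \<sigma> k) \<le> 1 / x"
proof -
  assume x: "0 < x"
  have "x \<le> sqrt (x\<^sup>2 + \<sigma> k)" using \<sigma>k x by (simp add: real_le_rsqrt)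
  then show ?thesis using x by (intro inv_anti) auto
qed

lemma D_le_X: assumes "0 < X" "X \<le> x" shows "1 / sqrt (x\<^sup>2 + \<sigma> k) \<le> 1 / X"
proof -
  have "1 / x \<le> 1 / X" using assms by (intro inv_anti) auto
  moreover have "1 / sqrt (x\<^sup>2 + \<sigma> k) \<le> 1 / x" using D_le_inv assms by auto
  ultimately show ?thesis by linarith
qed

lemma D_le_1: assumes "1 \<le> x" shows "1 / sqrt (x\<^sup>2 + \<sigma> k) \<le> 1"
  using D_le_X[of 1 x] assms by simp

lemma bound_pos: assumes s: "s = 1" shows "norm (integral {0..L} F) \<le> 33"
proof (cases "L \<le> 1")
  case True
  have "norm (integral {0..L} F) \<le> (L - 0) * w L" using trivial_bound[of 0 L] L_pos by auto
  also have "\<dots> \<le> 1 * 1" using True L_pos w_le1[of L] w_nonneg[of L] by (intro mult_mono) auto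
  finally show ?thesis by simp
next
  case False
  have e: "integral {0..L} F = integral {0..1} F + integral {1..L} F" using False by (intro int_split) auto
  have "norm (integral {0..1} F) \<le> 1"
    using trivial_bound[of 0 1] False w_le1[of 1] by auto
  moreover have "norm (integral {1..L} F) \<le> 32 * 1 / 1"
  proof (rule region')
    show "(\<forall>x\<in>{1..L}. 1 \<le> q x) \<or> (\<forall>x\<in>{1..L}. q x \<le> -1)"
      using G_pos s unfolding q_def by (auto simp: less_imp_le)
    show "1 / sqrt (x\<^sup>2 + \<sigma> k) \<le> 1" if "1 \<le> x" for x
      using D_le_1[OF that] .
  qed (use False in auto)
  moreover have "norm (integral {0..1} F + integral {1..L} F) \<le> norm (integral {0..1} F) + norm (integral {1..L} F)"
    by (rule norm_triangle_ineq)
  ultimately show ?thesis unfolding e by linarith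
qed

end

context setting begin

lemma S_lower_T:
  assumes "0 < \<beta>" "\<beta> \<le> L"
  shows "G (\<beta>\<^sup>2) / (1 + \<sigma> 1 + \<rho> l) \<le> (\<Sum>j=1..m. b j / ((\<beta>\<^sup>2 + \<sigma> j) * sqrt (\<beta>\<^sup>2 + \<sigma> j)))"
proof -
  have "G (\<beta>\<^sup>2) / (1 + \<sigma> 1 + \<rho> l) = (\<Sum>j=1..m. b j / ((1 + \<sigma> 1 + \<rho> l) * sqrt (\<beta>\<^sup>2 + \<sigma> j)))"
    unfolding G_def sum_divide_distrib by (simp add: ac_simps)
  also have "\<dots> \<le> (\<Sum>j=1..m. b j / ((\<beta>\<^sup>2 + \<sigma> j) * sqrt (\<beta>\<^sup>2 + \<sigma> j)))"
  proof (rule sum_mono)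
    fix j assume j: "j \<in> {1..m}"
    have "\<beta>\<^sup>2 \<le> \<rho> l" using assms L_sq by (metis less_imp_le power_mono)
    then have t: "\<beta>\<^sup>2 + \<sigma> j \<le> 1 + \<sigma> 1 + \<rho> l" using \<sigma>_le1[OF j] by linarith
    have p1: "0 < \<beta>\<^sup>2 + \<sigma> j" using G_term_pos[OF j assms(1)] .
    then have p2: "0 < sqrt (\<beta>\<^sup>2 + \<sigma> j)" by simp
    have le: "(\<beta>\<^sup>2 + \<sigma> j) * sqrt (\<beta>\<^sup>2 + \<sigma> j) \<le> (1 + \<sigma> 1 + \<rho> l) * sqrt (\<beta>\<^sup>2 + \<sigma> j)"
      using t p2 by (intro mult_right_mono) auto
    have pp: "0 < (1 + \<sigma> 1 + \<rho> l) * sqrt (\<beta>\<^sup>2 + \<sigma> j) * ((\<beta>\<^sup>2 + \<sigma> j) * sqrt (\<beta>\<^sup>2 + \<sigma> j))"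
      using p1 p2 t by (intro mult_pos_pos) auto
    show "b j / ((1 + \<sigma> 1 + \<rho> l) * sqrt (\<beta>\<^sup>2 + \<sigma> j)) \<le> b j / ((\<beta>\<^sup>2 + \<sigma> j) * sqrt (\<beta>\<^sup>2 + \<sigma> j))"
      by (rule divide_left_mono[OF le _ pp]) (use b_pos[OF j] in auto)
  qed
  finally show ?thesis .
qed

lemma bound1: assumes s: "s = -1"
  shows "norm (integral {0..L} F) \<le> 131 * (1 + \<sigma> 1 + \<rho> l) powr (1/4)"
proof -
  define T where "T = 1 + \<sigma> 1 + \<rho> l"
  define X where "X = T powr (1/4)"
  have T1: "1 \<le> T" unfolding T_def using \<sigma>_nonneg[of 1] m1 \<rho>l by auto
  have X1: "1 \<le> X" unfolding X_def using T1 by (simp add: ge_one_powr_ge_zero)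
  have X4: "X\<^sup>2 * X\<^sup>2 = T"
  proof -
    have "X\<^sup>2 * X\<^sup>2 = X ^ 4" by (simp add: power2_eq_square power4_eq_xxxx)
    also have "\<dots> = X powr 4" using X1 by simp
    also have "\<dots> = T powr (1/4 * 4)" unfolding X_def by (simp add: powr_powr)
    also have "\<dots> = T" using T1 by simp
    finally show ?thesis .
  qed
  define \<eta> where "\<eta> = 1 / (2 * X\<^sup>2)"
  have X21: "1 \<le> X\<^sup>2" using X1 by (simp add: one_le_power)
  have eta: "0 < \<eta>" "\<eta> \<le> 1/2" unfolding \<eta>_def using X21 by (auto simp: divide_simps)
  have Xpos: "0 < X" using X1 by auto
  show ?thesis
  proof (cases "L \<le> X")
    case True
    have "norm (integral {0..L} F) \<le> (L - 0) * w L" using trivial_bound[of 0 L] L_pos by auto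
    also have "\<dots> \<le> X * 1" using True L_pos w_le1[of L] w_nonneg[of L] by (intro mult_mono) auto
    finally show ?thesis unfolding X_def T_def using Xpos[unfolded X_def T_def] by linarith
  next
    case False
    have qc: "continuous_on {X..L} q" using q_cont Xpos by auto
    have qm: "q x \<le> q y" if "X \<le> x" "x \<le> y" "y \<le> L" for x y using q_mono_neg[OF s, of x y] that Xpos by auto
    obtain p1 where p1: "X \<le> p1" "p1 \<le> L" "X < p1 \<Longrightarrow> \<forall>x\<in>{X..p1}. q x \<le> -\<eta>"
      "p1 < L \<Longrightarrow> \<forall>x\<in>{p1..L}. -\<eta> \<le> q x"
      using split_thr[of X L q "-\<eta>"] False qc qm by auto
    have qc2: "continuous_on {p1..L} q" using q_cont Xpos p1 by auto
    obtain p2 where p2: "p1 \<le> p2" "p2 \<le> L" "p1 < p2 \<Longrightarrow> \<forall>x\<in>{p1..p2}. q x \<le> \<eta>"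
      "p2 < L \<Longrightarrow> \<forall>x\<in>{p2..L}. \<eta> \<le> q x"
      using split_thr[of p1 L q \<eta>] p1 qc2 qm by auto
    have split: "integral {0..L} F = integral {0..X} F + (integral {X..p1} F + (integral {p1..p2} F + integral {p2..L} F))"
      using int_split[of 0 X L] int_split[of X p1 L] int_split[of p1 p2 L] p1 p2 Xpos by auto
    have i0: "norm (integral {0..X} F) \<le> X"
    proof -
      have "norm (integral {0..X} F) \<le> (X - 0) * w X" using trivial_bound[of 0 X] False Xpos by auto
      also have "\<dots> \<le> X" using w_le1[of X] Xpos by (simp add: mult_left_le)
      finally show ?thesis .
    qed
    have iM2: "1 / sqrt (x\<^sup>2 + \<sigma> k) \<le> 1 / X" if "X \<le> x" for x
      using D_le_X[OF Xpos that] .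
    have c64: "32 * (1 / X) / \<eta> = 64 * X" unfolding \<eta>_def using Xpos by (simp add: field_simps power2_eq_square)
    have i1: "norm (integral {X..p1} F) \<le> 32 * (1 / X) / \<eta>"
      by (rule region') (use p1 Xpos eta iM2 in auto)
    have i3: "norm (integral {p2..L} F) \<le> 32 * (1 / X) / \<eta>"
      by (rule region') (use p1 p2 Xpos eta iM2 in auto)
    have i2: "norm (integral {p1..p2} F) \<le> 2 * X"
    proof (cases "p1 < p2")
      case False then show ?thesis using Xpos p2 by simp
    next
      case True
      have hq1: "-\<eta> \<le> q p1" using p1(4) p2 True by auto
      have hq2: "q p2 \<le> \<eta>" using p2(3) True p2 by auto
      have p1pos: "0 < p1" using p1 Xpos by auto
      have Gd: "(p2\<^sup>2 - p1\<^sup>2) / 2 * (\<Sum>j=1..m. b j / ((p2\<^sup>2 + \<sigma> j) * sqrt (p2\<^sup>2 + \<sigma> j))) \<le> 2 * \<eta>"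
        using G_diff[OF p1pos p2(1)] hq1 hq2 s unfolding q_def by simp
      have Sl: "G (p2\<^sup>2) / T \<le> (\<Sum>j=1..m. b j / ((p2\<^sup>2 + \<sigma> j) * sqrt (p2\<^sup>2 + \<sigma> j)))"
        using S_lower_T[of p2] p1pos p2 unfolding T_def by auto
      have Gp2: "1/2 \<le> G (p2\<^sup>2)" using hq2 s eta unfolding q_def by simp
      have du: "0 \<le> p2\<^sup>2 - p1\<^sup>2" using p2 p1pos by (simp add: power_mono)
      have "(p2\<^sup>2 - p1\<^sup>2) / 2 * (1 / (2 * T)) \<le> (p2\<^sup>2 - p1\<^sup>2) / 2 * (G (p2\<^sup>2) / T)"
        using Gp2 T1 du by (intro mult_left_mono) (auto simp: divide_simps)
      also have "\<dots> \<le> (p2\<^sup>2 - p1\<^sup>2) / 2 * (\<Sum>j=1..m. b j / ((p2\<^sup>2 + \<sigma> j) * sqrt (p2\<^sup>2 + \<sigma> j)))"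
        by (rule mult_left_mono[OF Sl]) (use du in simp)
      also have "\<dots> \<le> 2 * \<eta>" by (rule Gd)
      finally have "(p2\<^sup>2 - p1\<^sup>2) \<le> 8 * \<eta> * T" using T1 by (simp add: field_simps)
      also have "\<dots> = 4 * X\<^sup>2" unfolding \<eta>_def using X4[symmetric] Xpos by (simp add: field_simps power2_eq_square)
      finally have du2: "p2\<^sup>2 - p1\<^sup>2 \<le> 4 * X\<^sup>2" .
      have "p2 - p1 \<le> 2 * X"
      proof -
        have "(p2 - p1) * (2 * X) \<le> (p2 - p1) * (p2 + p1)" using True p1 p2 by (intro mult_left_mono) auto
        also have "\<dots> = p2\<^sup>2 - p1\<^sup>2" by (simp add: power2_eq_square algebra_simps)
        also have "\<dots> \<le> (2 * X) * (2 * X)" using du2 by (simp add: power2_eq_square)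
        finally show ?thesis using Xpos by simp
      qed
      moreover have "norm (integral {p1..p2} F) \<le> (p2 - p1) * w p2" using trivial_bound[of p1 p2] p1pos p2 by auto
      moreover have "(p2 - p1) * w p2 \<le> p2 - p1" using w_le1[of p2] w_nonneg[of p2] p1pos p2 True
        by (simp add: mult_left_le)
      ultimately show ?thesis by linarith
    qed
    have "norm (integral {0..L} F) \<le> X + 64 * X + 2 * X + 64 * X"
      unfolding split using norm4[of "integral {0..X} F" "integral {X..p1} F" "integral {p1..p2} F" "integral {p2..L} F"]
        i0 i1 i2 i3 c64 by linarith
    then show ?thesis unfolding X_def T_def by simp
  qed
qed

end

context setting begin

lemma ak_le_G: assumes "0 < x" shows "b k / sqrt (x\<^sup>2 + \<sigma> k) \<le> G (x\<^sup>2)"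
  unfolding G_def
proof (rule member_le_sum[where f="\<lambda>j. b j / sqrt (x\<^sup>2 + \<sigma> j)" and i=k])
  show "k \<in> {1..m}" using kin .
  show "0 \<le> b j / sqrt (x\<^sup>2 + \<sigma> j)" if "j \<in> {1..m} - {k}" for j
  proof -
    have j: "j \<in> {1..m}" using that by auto
    have "0 \<le> x\<^sup>2 + \<sigma> j" using \<sigma>_nonneg[OF j] by simp
    then show ?thesis using b_pos[OF j] by (intro divide_nonneg_nonneg) auto
  qed
qed auto

lemma B_pos: "0 < B" using b_le_B[OF kin] bk by linarith

lemma S_lower_m:
  assumes "0 < \<beta>" "1/2 \<le> G (\<beta>\<^sup>2)"
  shows "1 / (8 * real m ^ 3 * B\<^sup>2) \<le> (\<Sum>j=1..m. b j / ((\<beta>\<^sup>2 + \<sigma> j) * sqrt (\<beta>\<^sup>2 + \<sigma> j)))"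
proof -
  define a where "a j = b j / sqrt (\<beta>\<^sup>2 + \<sigma> j)" for j
  define Ma where "Ma = Max (a ` {1..m})"
  have fin: "finite (a ` {1..m})" "a ` {1..m} \<noteq> {}" using m1 by auto
  obtain j where j: "j \<in> {1..m}" "a j = Ma" using Max_in[OF fin] unfolding Ma_def by auto
  have ale: "a i \<le> a j" if "i \<in> {1..m}" for i using Max_ge[OF fin(1)] that j unfolding Ma_def by auto
  have Gm: "G (\<beta>\<^sup>2) \<le> real m * a j"
    unfolding G_def a_def[symmetric] using sum_bounded_above[of "{1..m}" a "a j"] ale by auto
  have h: "1 \<le> a j * (2 * real m)" using Gm assms(2) by (simp add: algebra_simps)
  have mpos: "0 < real m" using m1 by simp
  have aj: "1 / (2 * real m) \<le> a j" using h mpos by (simp add: divide_le_eq)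
  have tpos: "0 < \<beta>\<^sup>2 + \<sigma> j" using G_term_pos[OF j(1) assms(1)] .
  have bj: "0 < b j" "b j \<le> B" using b_pos[OF j(1)] b_le_B[OF j(1)] by auto
  have eq: "b j / ((\<beta>\<^sup>2 + \<sigma> j) * sqrt (\<beta>\<^sup>2 + \<sigma> j)) = a j ^ 3 / (b j)\<^sup>2"
  proof -
    define r where "r = sqrt (\<beta>\<^sup>2 + \<sigma> j)"
    have r: "0 < r" "\<beta>\<^sup>2 + \<sigma> j = r\<^sup>2" unfolding r_def using tpos by (auto simp: less_imp_le)
    have "b j / (r\<^sup>2 * r) = (b j / r) ^ 3 / (b j)\<^sup>2" using r(1) bj(1)
      by (simp add: field_simps power2_eq_square power3_eq_cube)
    moreover have "b j / ((\<beta>\<^sup>2 + \<sigma> j) * sqrt (\<beta>\<^sup>2 + \<sigma> j)) = b j / (r\<^sup>2 * r)"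
    proof -
      have "b j / ((\<beta>\<^sup>2 + \<sigma> j) * sqrt (\<beta>\<^sup>2 + \<sigma> j)) = b j / ((\<beta>\<^sup>2 + \<sigma> j) * r)"
        by (simp add: r_def)
      also have "\<dots> = b j / (r\<^sup>2 * r)" by (simp only: r(2))
      finally show ?thesis .
    qed
    moreover have "a j ^ 3 / (b j)\<^sup>2 = (b j / r) ^ 3 / (b j)\<^sup>2" by (simp add: a_def r_def)
    ultimately show ?thesis by linarith
  qed
  have "1 / (8 * real m ^ 3 * B\<^sup>2) = (1 / (2 * real m)) ^ 3 / B\<^sup>2"
    by (simp add: power_divide power_mult_distrib)
  also have "\<dots> \<le> a j ^ 3 / B\<^sup>2"
    using aj m1 by (intro divide_right_mono power_mono) auto
  also have "\<dots> \<le> a j ^ 3 / (b j)\<^sup>2"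
    using bj aj m1 by (intro divide_left_mono power_mono mult_pos_pos zero_le_power) (auto intro: order.trans[rotated])
  also have "\<dots> = b j / ((\<beta>\<^sup>2 + \<sigma> j) * sqrt (\<beta>\<^sup>2 + \<sigma> j))" using eq by simp
  also have "\<dots> \<le> (\<Sum>j=1..m. b j / ((\<beta>\<^sup>2 + \<sigma> j) * sqrt (\<beta>\<^sup>2 + \<sigma> j)))"
  proof (rule member_le_sum[OF j(1)])
    show "0 \<le> b i / ((\<beta>\<^sup>2 + \<sigma> i) * sqrt (\<beta>\<^sup>2 + \<sigma> i))" if "i \<in> {1..m} - {j}" for i
    proof -
      have i: "i \<in> {1..m}" using that by auto
      have "0 < \<beta>\<^sup>2 + \<sigma> i" using G_term_pos[OF i assms(1)] .
      then show ?thesis using b_pos[OF i] by (intro divide_nonneg_nonneg) auto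
    qed
  qed auto
  finally show ?thesis .
qed

end

context setting begin

lemma bound2: assumes s: "s = -1"
  shows "norm (integral {0..L} F) \<le> 353 * (real m powr (3/2) * B / b k)"
proof -
  define V where "V = real m powr (3/2) * B"
  define W where "W = V / b k"
  have mp: "1 \<le> real m powr (3/2)" using m1 by (simp add: ge_one_powr_ge_zero)
  have V2: "V\<^sup>2 = real m ^ 3 * B\<^sup>2"
  proof -
    have "(real m powr (3/2))\<^sup>2 = real m powr (3/2) * real m powr (3/2)" by (rule power2_eq_square)
    also have "\<dots> = real m powr (3/2 + 3/2)" by (rule powr_add[symmetric])
    also have "\<dots> = real m powr 3" by simp
    also have "\<dots> = real m ^ 3" by simp
    finally show ?thesis unfolding V_def by (simp add: power_mult_distrib)
  qed
  have VB: "B \<le> V"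
  proof -
    have "1 * B \<le> real m powr (3/2) * B" by (rule mult_right_mono[OF mp]) (use B_pos in simp)
    then show ?thesis unfolding V_def by simp
  qed
  have W1: "1 \<le> W"
  proof -
    have "b k \<le> V" using VB b_le_B[OF kin] by linarith
    then show ?thesis unfolding W_def using bk by (simp add: le_divide_eq)
  qed
  have Vpos: "0 < V" using VB B_pos by auto
  define \<eta> where "\<eta> = 1 / (V + 2)"
  have eta: "0 < \<eta>" "\<eta> \<le> 1/2" unfolding \<eta>_def using Vpos by (auto simp: divide_simps)
  have minb: "32 * min 1 (2 / b k) / \<eta> \<le> 128 * W"
  proof -
    have "min 1 (2 / b k) * V \<le> 2 * W" unfolding W_def using Vpos bk
      by (simp add: min_def divide_simps)
    moreover have "min 1 (2 / b k) * 2 \<le> 2 * W" using W1 by linarith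
    ultimately have "min 1 (2 / b k) * (V + 2) \<le> 4 * W" by (simp add: algebra_simps)
    then show ?thesis unfolding \<eta>_def by (simp add: mult.commute)
  qed
  show ?thesis
  proof (cases "L \<le> 1")
    case True
    have "norm (integral {0..L} F) \<le> (L - 0) * w L" using trivial_bound[of 0 L] L_pos by auto
    also have "\<dots> \<le> 1 * 1" using True L_pos w_le1[of L] w_nonneg[of L] by (intro mult_mono) auto
    finally show ?thesis using W1 unfolding W_def V_def by simp
  next
    case False
    have qc: "continuous_on {p..L} q" if "1 \<le> p" for p using q_cont that by auto
    have qm: "q x \<le> q y" if "1 \<le> x" "x \<le> y" "y \<le> L" for x y using q_mono_neg[OF s, of x y] that by auto
    obtain p1 where p1: "1 \<le> p1" "p1 \<le> L" "1 < p1 \<Longrightarrow> \<forall>x\<in>{1..p1}. q x \<le> -1"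
      "p1 < L \<Longrightarrow> \<forall>x\<in>{p1..L}. -1 \<le> q x"
      using split_thr[of 1 L q "-1"] False qc[of 1] qm by auto
    obtain p2 where p2: "p1 \<le> p2" "p2 \<le> L" "p1 < p2 \<Longrightarrow> \<forall>x\<in>{p1..p2}. q x \<le> -\<eta>"
      "p2 < L \<Longrightarrow> \<forall>x\<in>{p2..L}. -\<eta> \<le> q x"
      using split_thr[of p1 L q "-\<eta>"] p1 qc[of p1] qm by auto
    have qcp: "continuous_on {p2..L} q" using qc p1 p2 by auto
    have qmp: "\<And>x y. p2 \<le> x \<Longrightarrow> x \<le> y \<Longrightarrow> y \<le> L \<Longrightarrow> q x \<le> q y" using qm p1 p2 by auto
    obtain p3 where p3: "p2 \<le> p3" "p3 \<le> L" "p2 < p3 \<Longrightarrow> \<forall>x\<in>{p2..p3}. q x \<le> \<eta>"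
      "p3 < L \<Longrightarrow> \<forall>x\<in>{p3..L}. \<eta> \<le> q x"
      using split_thr[OF p2(2) qcp qmp, of \<eta>] by blast
    have split: "integral {0..L} F = integral {0..1} F + (integral {1..p1} F + (integral {p1..p2} F
        + (integral {p2..p3} F + integral {p3..L} F)))"
      using int_split[of 0 1 L] int_split[of 1 p1 L] int_split[of p1 p2 L] int_split[of p2 p3 L] p1 p2 p3
      by auto
    have i0: "norm (integral {0..1} F) \<le> 1"
      using trivial_bound[of 0 1] False w_le1[of 1] by auto
    have D1: "1 / sqrt (x\<^sup>2 + \<sigma> k) \<le> 1" if "1 \<le> x" for x
      using D_le_1[OF that] .
    have D2: "1 / sqrt (x\<^sup>2 + \<sigma> k) \<le> 2 / b k" if "1 \<le> x" "G (x\<^sup>2) \<le> 2" for x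
    proof -
      have "b k / sqrt (x\<^sup>2 + \<sigma> k) \<le> 2" using ak_le_G[of x] that by auto
      then show ?thesis using bk by (simp add: divide_simps mult.commute)
    qed
    have i1: "norm (integral {1..p1} F) \<le> 32 * 1 / 1"
      by (rule region') (use p1 D1 in auto)
    have i2: "norm (integral {p1..p2} F) \<le> 32 * min 1 (2 / b k) / \<eta>"
    proof (rule region')
      fix x assume x: "p1 < p2" "p1 \<le> x" "x \<le> p2"
      have "-1 \<le> q x" using p1(4) x p2 by auto
      then have "G (x\<^sup>2) \<le> 2" using s unfolding q_def by simp
      then show "1 / sqrt (x\<^sup>2 + \<sigma> k) \<le> min 1 (2 / b k)" using D1 D2 x p1 by auto
    qed (use p1 p2 eta bk in auto)
    have i4: "norm (integral {p3..L} F) \<le> 32 * min 1 (2 / b k) / \<eta>"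
    proof (rule region')
      fix x assume x: "p3 < L" "p3 \<le> x" "x \<le> L"
      have "\<eta> \<le> q x" using p3(4) x by auto
      then have "G (x\<^sup>2) \<le> 2" using s eta unfolding q_def by simp
      then show "1 / sqrt (x\<^sup>2 + \<sigma> k) \<le> min 1 (2 / b k)" using D1 D2 x p1 p2 p3 by auto
    qed (use p1 p2 p3 eta bk in auto)
    have i3: "norm (integral {p2..p3} F) \<le> 64 * W"
    proof (cases "p2 < p3")
      case False then show ?thesis using W1 p3 by simp
    next
      case True
      have hq1: "-\<eta> \<le> q p2" using p2(4) p3 True by auto
      have hq2: "q p3 \<le> \<eta>" using p3(3) True p3 by auto
      have p2pos: "0 < p2" using p1 p2 by auto
      define S where "S = (\<Sum>j=1..m. b j / ((p3\<^sup>2 + \<sigma> j) * sqrt (p3\<^sup>2 + \<sigma> j)))"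
      have Gd: "(p3\<^sup>2 - p2\<^sup>2) / 2 * S \<le> 2 * \<eta>"
        using G_diff[OF p2pos p3(1)] hq1 hq2 s unfolding q_def S_def by simp
      have Gp3: "1/2 \<le> G (p3\<^sup>2)" "G (p3\<^sup>2) \<le> 2" using hq2 hq1 s eta qm[of p2 p3] p1 p2 p3 unfolding q_def by auto
      have Sl: "1 / (8 * real m ^ 3 * B\<^sup>2) \<le> S" using S_lower_m[OF _ Gp3(1)] p2pos p3 unfolding S_def by auto
      have du: "0 \<le> p3\<^sup>2 - p2\<^sup>2" using p3 p2pos by (simp add: power_mono)
      have mB: "0 < 8 * real m ^ 3 * B\<^sup>2" using m1 B_pos by auto
      have "(p3\<^sup>2 - p2\<^sup>2) / 2 * (1 / (8 * real m ^ 3 * B\<^sup>2)) \<le> (p3\<^sup>2 - p2\<^sup>2) / 2 * S"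
        by (rule mult_left_mono[OF Sl]) (use du in simp)
      then have "(p3\<^sup>2 - p2\<^sup>2) / 2 * (1 / (8 * real m ^ 3 * B\<^sup>2)) \<le> 2 * \<eta>"
        using Gd by linarith
      then have du2: "p3\<^sup>2 - p2\<^sup>2 \<le> 32 * \<eta> * (real m ^ 3 * B\<^sup>2)" using mB by (simp add: field_simps)
      have p3pos: "0 < p3" using p2pos p3 by auto
      have sq: "0 < sqrt (p3\<^sup>2 + \<sigma> k)" using p3pos \<sigma>k by (simp add: add_pos_nonneg)
      have "norm (integral {p2..p3} F) \<le> (p3 - p2) * w p3" using trivial_bound[of p2 p3] p2pos p3 by auto
      also have "\<dots> = (p3 - p2) * p3 / sqrt (p3\<^sup>2 + \<sigma> k)" unfolding w_def by simp
      also have "\<dots> \<le> (p3\<^sup>2 - p2\<^sup>2) / sqrt (p3\<^sup>2 + \<sigma> k)"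
      proof (intro divide_right_mono)
        have "(p3 - p2) * p3 \<le> (p3 - p2) * (p3 + p2)" using True p2pos by (intro mult_left_mono) auto
        then show "(p3 - p2) * p3 \<le> p3\<^sup>2 - p2\<^sup>2" by (simp add: power2_eq_square algebra_simps)
      qed (use sq in auto)
      also have "\<dots> = (p3\<^sup>2 - p2\<^sup>2) * (1 / sqrt (p3\<^sup>2 + \<sigma> k))" by simp
      also have "\<dots> \<le> (32 * \<eta> * (real m ^ 3 * B\<^sup>2)) * (2 / b k)"
      proof (rule mult_mono)
        show "p3\<^sup>2 - p2\<^sup>2 \<le> 32 * \<eta> * (real m ^ 3 * B\<^sup>2)" by (rule du2)
        show "1 / sqrt (p3\<^sup>2 + \<sigma> k) \<le> 2 / b k" using D2[of p3] Gp3 p1 p2 p3 by auto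
        show "0 \<le> 32 * \<eta> * (real m ^ 3 * B\<^sup>2)" using eta by simp
        show "0 \<le> 1 / sqrt (p3\<^sup>2 + \<sigma> k)" using sq by simp
      qed
      also have "\<dots> = 64 * V\<^sup>2 / ((V + 2) * b k)" unfolding \<eta>_def V2[symmetric] by simp
      also have "\<dots> \<le> 64 * V\<^sup>2 / (V * b k)"
        using Vpos bk by (intro divide_left_mono mult_right_mono mult_pos_pos) auto
      also have "\<dots> = 64 * W" unfolding W_def using Vpos bk by (simp add: power2_eq_square)
      finally show ?thesis .
    qed
    have "norm (integral {0..L} F) \<le> 1 + 32 + 128 * W + 64 * W + 128 * W"
      unfolding split using norm5[of "integral {0..1} F" "integral {1..p1} F" "integral {p1..p2} F"
        "integral {p2..p3} F" "integral {p3..L} F"] i0 i1 i2 i3 i4 minb by linarith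
    then have "norm (integral {0..L} F) \<le> 353 * W" using W1 by linarith
    then show ?thesis unfolding W_def V_def .
  qed
qed

end

context setting begin

lemma main: "norm (integral {0..L} F) \<le> 400 * min ((1 + \<sigma> 1 + \<rho> l) powr (1/4)) (real m powr (3/2) * B / b k)"
proof -
  have X1: "1 \<le> (1 + \<sigma> 1 + \<rho> l) powr (1/4)" using \<sigma>_nonneg[of 1] m1 \<rho>l by (simp add: ge_one_powr_ge_zero)
  have mp: "1 \<le> real m powr (3/2)" using m1 by (simp add: ge_one_powr_ge_zero)
  have W1: "1 \<le> real m powr (3/2) * B / b k"
  proof -
    have "1 * B \<le> real m powr (3/2) * B" by (rule mult_right_mono[OF mp]) (use B_pos in simp)
    then have "B \<le> real m powr (3/2) * B" by simp
    then have "b k \<le> real m powr (3/2) * B" using b_le_B[OF kin] by linarith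
    then show ?thesis using bk by (simp add: le_divide_eq)
  qed
  show ?thesis
  proof (cases "s = 1")
    case True
    then show ?thesis using bound_pos X1 W1 by (simp add: min_def)
  next
    case False
    then have s: "s = -1" using s1 by auto
    show ?thesis using bound1[OF s] bound2[OF s] X1 W1 by (simp add: min_def)
  qed
qed

lemma main': "norm (integral {0..sqrt (\<rho> l)} (\<lambda>x::real.
        exp (\<i> * complex_of_real (x\<^sup>2 / 2))
      * exp (\<i> * complex_of_real (s * (\<Sum>j=1..m. b j * sqrt (x\<^sup>2 + \<sigma> j))))
      * complex_of_real (exp (- (\<Sum>i=1..l. c i * sqrt (\<rho> i - x\<^sup>2))))
      * complex_of_real (x / sqrt (x\<^sup>2 + \<sigma> k))))
    \<le> 400 * min ((1 + \<sigma> 1 + \<rho> l) powr (1/4))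
                 (real m powr (3/2) * Max (b ` {1..m}) / b k)"
  using main unfolding L_def B_def F_def[abs_def] .

end

theorem lemma7p5:
  shows "\<exists>C0::real. \<forall>(m::nat) (l::nat) (\<sigma>::nat \<Rightarrow> real) (\<rho>::nat \<Rightarrow> real)
      (b::nat \<Rightarrow> real) (c::nat \<Rightarrow> real) (k::nat) (s::real).
    1 \<le> m \<longrightarrow> 1 \<le> l \<longrightarrow>
    (\<forall>i j. 1 \<le> i \<longrightarrow> i \<le> j \<longrightarrow> j \<le> m \<longrightarrow> \<sigma> j \<le> \<sigma> i) \<longrightarrow> \<sigma> m \<ge> 0 \<longrightarrow>
    (\<forall>i j. 1 \<le> i \<longrightarrow> i \<le> j \<longrightarrow> j \<le> l \<longrightarrow> \<rho> j \<le> \<rho> i) \<longrightarrow> \<rho> l > 0 \<longrightarrow>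
    (\<forall>j\<in>{1..m}. b j > 0) \<longrightarrow> (\<forall>i\<in>{1..l}. c i > 0) \<longrightarrow>
    k \<in> {1..m} \<longrightarrow> s \<in> {1, -1} \<longrightarrow>
    norm (integral {0..sqrt (\<rho> l)} (\<lambda>x::real.
        exp (\<i> * complex_of_real (x\<^sup>2 / 2))
      * exp (\<i> * complex_of_real (s * (\<Sum>j=1..m. b j * sqrt (x\<^sup>2 + \<sigma> j))))
      * complex_of_real (exp (- (\<Sum>i=1..l. c i * sqrt (\<rho> i - x\<^sup>2))))
      * complex_of_real (x / sqrt (x\<^sup>2 + \<sigma> k))))
    \<le> C0 * min ((1 + \<sigma> 1 + \<rho> l) powr (1/4))
                 (real m powr (3/2) * Max (b ` {1..m}) / b k)"
proof (intro exI[of _ 400] allI impI)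
  fix m l :: nat and \<sigma> \<rho> b c :: "nat \<Rightarrow> real" and k :: nat and s :: real
  assume "1 \<le> m" "1 \<le> l" "\<forall>i j. 1 \<le> i \<longrightarrow> i \<le> j \<longrightarrow> j \<le> m \<longrightarrow> \<sigma> j \<le> \<sigma> i" "\<sigma> m \<ge> 0"
    "\<forall>i j. 1 \<le> i \<longrightarrow> i \<le> j \<longrightarrow> j \<le> l \<longrightarrow> \<rho> j \<le> \<rho> i" "\<rho> l > 0"
    "\<forall>j\<in>{1..m}. b j > 0" "\<forall>i\<in>{1..l}. c i > 0" "k \<in> {1..m}" "s \<in> {1, -1}"
  then interpret setting m l \<sigma> \<rho> b c k s by unfold_locales
  show "norm (integral {0..sqrt (\<rho> l)} (\<lambda>x::real.
        exp (\<i> * complex_of_real (x\<^sup>2 / 2))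
      * exp (\<i> * complex_of_real (s * (\<Sum>j=1..m. b j * sqrt (x\<^sup>2 + \<sigma> j))))
      * complex_of_real (exp (- (\<Sum>i=1..l. c i * sqrt (\<rho> i - x\<^sup>2))))
      * complex_of_real (x / sqrt (x\<^sup>2 + \<sigma> k))))
    \<le> 400 * min ((1 + \<sigma> 1 + \<rho> l) powr (1/4))
                 (real m powr (3/2) * Max (b ` {1..m}) / b k)"
    by (rule main')
qed


end
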